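(* For $k=1,\dots,K$, let $\mathcal{P}^k$ be a family of probability densities on $\mathbb{R}^n$, and let $X^k_1,X^k_2\subset\mathbb{R}^n$ be nonempty closed convex non-intersecting sets, one of them bounded. Let $(x^{1}_{k*},x^{2}_{k*})$ minimize $\|x^1-x^2\|_2$ over $x^1\in X^k_1,x^2\in X^k_2$ and set $h_k=(x^1_{k*}-x^2_{k*})/\|x^1_{k*}-x^2_{k*}\|_2$, $c_k=\tfrac12h_k^T(x^1_{k*}+x^2_{k*})$, $\delta_k=\tfrac12\|x^1_{k*}-x^2_{k*}\|_2$. Given potentials $\eta_1,\dots,\eta_K$, define $\phi_k(\omega)=\eta_k(h_k^T\omega-c_k)$ and $\phi^{(K)}(\omega_1,\dots,\omega_K)=\sum_{k=1}^K\phi_k(\omega_k)$. Then (a) for all $x_k\in X^k_1$, $p_k\in\mathcal{P}^k$, $k\le K$: $\int e^{-\phi^{(K)}(x_1+\xi_1,\dots,x_K+\xi_K)}\prod_{k=1}^K p_k(\xi_k)d\xi_k\le\prod_{k=1}^K\mathrm{risk}_{\delta_k}(\eta_k|\mathcal{P}^k)$; (b) for all $x_k\in X^k_2$, $p_k\in\mathcal{P}^k$, $k\le K$: $\int e^{\phi^{(K)}(x_1+\xi_1,\dots,x_K+\xi_K)}\prod_{k=1}^K p_k(\xi_k)d\xi_k\le\prod_{k=1}^K\mathrm{risk}_{\delta_k}(\eta_k|\mathcal{P}^k)$.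
   Context: A potential is an odd, nondecreasing Borel function $\eta:\mathbb{R}\to\mathbb{R}$. For a family $\mathcal{P}$ of probability densities on $\mathbb{R}^n$, $\delta\ge0$ and a potential $\eta$, the $\delta$-risk $\mathrm{risk}_\delta(\eta|\mathcal{P})$ is the smallest $\epsilon$ such that for all $e\in\mathbb{R}^n$ with $\|e\|_2=1$ and all $p\in\mathcal{P}$: $\int e^{-\eta(\delta+e^T\xi)}p(\xi)d\xi\le\epsilon$ and $\int e^{\eta(e^T\xi-\delta)}p(\xi)d\xi\le\epsilon$. *)

theory Defs
  imports "HOL-Probability.Probability"
begin

definition potential :: "(real \<Rightarrow> real) \<Rightarrow> bool" where
  "potential \<eta> \<longleftrightarrow> \<eta> \<in> borel_measurable borel \<and> mono \<eta> \<and> (\<forall>x. \<eta> (- x) = - \<eta> x)"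

definition prob_density :: "('a::euclidean_space \<Rightarrow> real) \<Rightarrow> bool" where
  "prob_density p \<longleftrightarrow> p \<in> borel_measurable lborel \<and> (\<forall>x. 0 \<le> p x)
     \<and> (\<integral>\<^sup>+ x. ennreal (p x) \<partial>lborel) = 1"

definition risk :: "real \<Rightarrow> (real \<Rightarrow> real) \<Rightarrow> ('a::euclidean_space \<Rightarrow> real) set \<Rightarrow> ennreal" where
  "risk \<delta> \<eta> P = Inf {\<epsilon>. \<forall>e::'a. norm e = 1 \<longrightarrow> (\<forall>p\<in>P.
      (\<integral>\<^sup>+ \<xi>. ennreal (exp (- \<eta> (\<delta> + e \<bullet> \<xi>)) * p \<xi>) \<partial>lborel) \<le> \<epsilon> \<and>
      (\<integral>\<^sup>+ \<xi>. ennreal (exp (\<eta> (e \<bullet> \<xi> - \<delta>)) * p \<xi>) \<partial>lborel) \<le> \<epsilon>)}"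

end

theory Submission
  imports Defs
begin

lemma geomA:
  fixes x1 x2 a :: "'a::euclidean_space"
  assumes ne: "x1 \<noteq> x2" and dot: "(x1 - x2) \<bullet> (a - x1) \<ge> 0"
  shows "((1 / norm (x1 - x2)) *\<^sub>R (x1 - x2)) \<bullet> a - (1/2) * (((1 / norm (x1 - x2)) *\<^sub>R (x1 - x2)) \<bullet> (x1 + x2))
         \<ge> (1/2) * norm (x1 - x2)"
proof -
  define d where "d = x1 - x2"
  have n: "norm d > 0" using ne d_def by auto
  have "d \<bullet> a \<ge> d \<bullet> x1" using dot d_def by (simp add: inner_diff_right)
  moreover have e: "d \<bullet> d = d \<bullet> x1 - d \<bullet> x2" by (simp add: d_def inner_diff_right)
  ultimately have "d \<bullet> a - (1/2) * (d \<bullet> (x1 + x2)) \<ge> (1/2) * (d \<bullet> d)"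
    by (simp add: inner_add_right e field_simps)
  hence "(d \<bullet> a - (1/2) * (d \<bullet> (x1 + x2))) / norm d \<ge> ((1/2) * (d \<bullet> d)) / norm d"
    by (rule divide_right_mono) (use n in auto)
  moreover have "((1/2) * (d \<bullet> d)) / norm d = (1/2) * norm d"
    using n by (simp add: power2_norm_eq_inner[symmetric] power2_eq_square)
  moreover have "((1 / norm d) *\<^sub>R d) \<bullet> a - (1/2) * (((1 / norm d) *\<^sub>R d) \<bullet> (x1 + x2))
     = (d \<bullet> a - (1/2) * (d \<bullet> (x1 + x2))) / norm d"
    using n by (simp add: field_simps)
  ultimately show ?thesis unfolding d_def[symmetric]
    by linarith
qed

lemma geomB:
  fixes x1 x2 b :: "'a::euclidean_space"
  assumes ne: "x1 \<noteq> x2" and dot: "(x1 - x2) \<bullet> (b - x2) \<le> 0"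
  shows "((1 / norm (x1 - x2)) *\<^sub>R (x1 - x2)) \<bullet> b - (1/2) * (((1 / norm (x1 - x2)) *\<^sub>R (x1 - x2)) \<bullet> (x1 + x2))
         \<le> - ((1/2) * norm (x1 - x2))"
proof -
  define d where "d = x1 - x2"
  have n: "norm d > 0" using ne d_def by auto
  have "d \<bullet> b \<le> d \<bullet> x2" using dot d_def by (simp add: inner_diff_right)
  moreover have e: "d \<bullet> d = d \<bullet> x1 - d \<bullet> x2" by (simp add: d_def inner_diff_right)
  ultimately have "d \<bullet> b - (1/2) * (d \<bullet> (x1 + x2)) \<le> - (1/2) * (d \<bullet> d)"
    by (simp add: inner_add_right e field_simps)
  hence "(d \<bullet> b - (1/2) * (d \<bullet> (x1 + x2))) / norm d \<le> (- (1/2) * (d \<bullet> d)) / norm d"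
    by (rule divide_right_mono) (use n in auto)
  moreover have "(- (1/2) * (d \<bullet> d)) / norm d = - (1/2) * norm d"
    using n by (simp add: power2_norm_eq_inner[symmetric] power2_eq_square)
  moreover have "((1 / norm d) *\<^sub>R d) \<bullet> b - (1/2) * (((1 / norm d) *\<^sub>R d) \<bullet> (x1 + x2))
     = (d \<bullet> b - (1/2) * (d \<bullet> (x1 + x2))) / norm d"
    using n by (simp add: field_simps)
  ultimately show ?thesis unfolding d_def[symmetric]
    by linarith
qed

lemma risk_ge1:
  fixes P :: "('a::euclidean_space \<Rightarrow> real) set"
  assumes "norm e = 1" "p \<in> P"
  shows "(\<integral>\<^sup>+ \<xi>. ennreal (exp (- \<eta> (\<delta> + e \<bullet> \<xi>)) * p \<xi>) \<partial>lborel) \<le> risk \<delta> \<eta> P"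
  unfolding risk_def using assms by (auto intro!: Inf_greatest)

lemma risk_ge2:
  fixes P :: "('a::euclidean_space \<Rightarrow> real) set"
  assumes "norm e = 1" "p \<in> P"
  shows "(\<integral>\<^sup>+ \<xi>. ennreal (exp (\<eta> (e \<bullet> \<xi> - \<delta>)) * p \<xi>) \<partial>lborel) \<le> risk \<delta> \<eta> P"
  unfolding risk_def using assms by (auto intro!: Inf_greatest)

lemma prod_int:
  fixes f :: "nat \<Rightarrow> 'a::euclidean_space \<Rightarrow> real"
  assumes "\<And>k. k \<in> I \<Longrightarrow> f k \<in> borel_measurable lborel" "\<And>k y. k \<in> I \<Longrightarrow> 0 \<le> f k y" "finite I"
  shows "(\<integral>\<^sup>+ \<xi>. ennreal (\<Prod>k\<in>I. f k (\<xi> k)) \<partial>(PiM I (\<lambda>_. lborel)))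
        = (\<Prod>k\<in>I. \<integral>\<^sup>+ y. ennreal (f k y) \<partial>lborel)"
proof -
  interpret product_sigma_finite "\<lambda>_. lborel :: 'a measure"
    by (simp add: product_sigma_finite_def lborel.sigma_finite_measure_axioms)
  have "(\<integral>\<^sup>+ \<xi>. ennreal (\<Prod>k\<in>I. f k (\<xi> k)) \<partial>(PiM I (\<lambda>_. lborel)))
      = (\<integral>\<^sup>+ \<xi>. (\<Prod>k\<in>I. ennreal (f k (\<xi> k))) \<partial>(PiM I (\<lambda>_. lborel)))"
    using assms(2) by (intro nn_integral_cong) (simp add: prod_ennreal)
  also have "\<dots> = (\<Prod>k\<in>I. \<integral>\<^sup>+ y. ennreal (f k y) \<partial>lborel)"
    using assms by (intro product_nn_integral_prod) auto
  finally show ?thesis .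
qed

theorem proposition2p10:
  fixes K :: nat
    and P :: "nat \<Rightarrow> ('a::euclidean_space \<Rightarrow> real) set"
    and X1 X2 :: "nat \<Rightarrow> 'a set"
    and x1s x2s :: "nat \<Rightarrow> 'a"
    and \<eta> :: "nat \<Rightarrow> real \<Rightarrow> real"
    and h :: "nat \<Rightarrow> 'a" and c \<delta> :: "nat \<Rightarrow> real"
    and \<phi>K :: "(nat \<Rightarrow> 'a) \<Rightarrow> real"
  assumes P_dens: "\<And>k p. k \<in> {1..K} \<Longrightarrow> p \<in> P k \<Longrightarrow> prob_density p"
    and X_ne: "\<And>k. k \<in> {1..K} \<Longrightarrow> X1 k \<noteq> {} \<and> X2 k \<noteq> {}"
    and X_closed: "\<And>k. k \<in> {1..K} \<Longrightarrow> closed (X1 k) \<and> closed (X2 k)"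
    and X_convex: "\<And>k. k \<in> {1..K} \<Longrightarrow> convex (X1 k) \<and> convex (X2 k)"
    and X_disj: "\<And>k. k \<in> {1..K} \<Longrightarrow> X1 k \<inter> X2 k = {}"
    and X_bdd: "\<And>k. k \<in> {1..K} \<Longrightarrow> bounded (X1 k) \<or> bounded (X2 k)"
    and x_mem: "\<And>k. k \<in> {1..K} \<Longrightarrow> x1s k \<in> X1 k \<and> x2s k \<in> X2 k"
    and x_min: "\<And>k a b. k \<in> {1..K} \<Longrightarrow> a \<in> X1 k \<Longrightarrow> b \<in> X2 k \<Longrightarrow>
                  norm (x1s k - x2s k) \<le> norm (a - b)"
    and h_def: "\<And>k. h k = (1 / norm (x1s k - x2s k)) *\<^sub>R (x1s k - x2s k)"
    and c_def: "\<And>k. c k = (1/2) * (h k \<bullet> (x1s k + x2s k))"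
    and \<delta>_def: "\<And>k. \<delta> k = (1/2) * norm (x1s k - x2s k)"
    and pot: "\<And>k. k \<in> {1..K} \<Longrightarrow> potential (\<eta> k)"
    and \<phi>K_def: "\<And>\<omega>. \<phi>K \<omega> = (\<Sum>k\<in>{1..K}. \<eta> k (h k \<bullet> \<omega> k - c k))"
  shows "(\<forall>x p. (\<forall>k\<in>{1..K}. x k \<in> X1 k \<and> p k \<in> P k) \<longrightarrow>
            (\<integral>\<^sup>+ \<xi>. ennreal (exp (- \<phi>K (\<lambda>k. x k + \<xi> k)) * (\<Prod>k\<in>{1..K}. p k (\<xi> k)))
               \<partial>(PiM {1..K} (\<lambda>_. lborel)))
            \<le> (\<Prod>k\<in>{1..K}. risk (\<delta> k) (\<eta> k) (P k)))
       \<and> (\<forall>x p. (\<forall>k\<in>{1..K}. x k \<in> X2 k \<and> p k \<in> P k) \<longrightarrow>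
            (\<integral>\<^sup>+ \<xi>. ennreal (exp (\<phi>K (\<lambda>k. x k + \<xi> k)) * (\<Prod>k\<in>{1..K}. p k (\<xi> k)))
               \<partial>(PiM {1..K} (\<lambda>_. lborel)))
            \<le> (\<Prod>k\<in>{1..K}. risk (\<delta> k) (\<eta> k) (P k)))"
proof -
  have ne: "x1s k \<noteq> x2s k" if "k \<in> {1..K}" for k
    using X_disj[OF that] x_mem[OF that] by auto
  have hn: "norm (h k) = 1" if "k \<in> {1..K}" for k
    using ne[OF that] by (simp add: h_def)
  have dotA: "(x1s k - x2s k) \<bullet> (a - x1s k) \<ge> 0" if k: "k \<in> {1..K}" and a: "a \<in> X1 k" for k a
  proof -
    have "inner (x2s k - x1s k) (a - x1s k) \<le> 0"
      apply (rule any_closest_point_dot[of "X1 k"])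
      using X_convex[OF k] X_closed[OF k] x_mem[OF k] a x_min[OF k _ ] 
      by (auto simp: dist_norm norm_minus_commute)
    thus ?thesis by (simp add: inner_diff_left)
  qed
  have dotB: "(x1s k - x2s k) \<bullet> (b - x2s k) \<le> 0" if k: "k \<in> {1..K}" and b: "b \<in> X2 k" for k b
  proof -
    have "inner (x1s k - x2s k) (b - x2s k) \<le> 0"
      apply (rule any_closest_point_dot[of "X2 k"])
      using X_convex[OF k] X_closed[OF k] x_mem[OF k] b x_min[OF k]
      by (auto simp: dist_norm)
    thus ?thesis .
  qed
  have meas: "\<eta> k \<in> borel_measurable borel" "mono (\<eta> k)" if "k \<in> {1..K}" for k
    using pot[OF that] by (auto simp: potential_def)
  have pm: "p \<in> borel_measurable lborel" "\<And>y. 0 \<le> p y" if "k \<in> {1..K}" "p \<in> P k" for k p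
    using P_dens[OF that] by (auto simp: prob_density_def)
  show ?thesis
  proof (intro conjI allI impI)
    fix x :: "nat \<Rightarrow> 'a" and p assume H: "\<forall>k\<in>{1..K}. x k \<in> X1 k \<and> p k \<in> P k"
    define f where "f k y = exp (- \<eta> k (h k \<bullet> (x k + y) - c k)) * p k y" for k y
    have "(\<integral>\<^sup>+ \<xi>. ennreal (exp (- \<phi>K (\<lambda>k. x k + \<xi> k)) * (\<Prod>k\<in>{1..K}. p k (\<xi> k)))
               \<partial>(PiM {1..K} (\<lambda>_. lborel))) = (\<integral>\<^sup>+ \<xi>. ennreal (\<Prod>k\<in>{1..K}. f k (\<xi> k))
               \<partial>(PiM {1..K} (\<lambda>_. lborel)))"
      by (intro nn_integral_cong) (simp add: f_def \<phi>K_def prod.distrib exp_sum sum_negf[symmetric])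
    also have "\<dots> = (\<Prod>k\<in>{1..K}. \<integral>\<^sup>+ y. ennreal (f k y) \<partial>lborel)"
    proof (rule prod_int)
      fix k assume k: "k \<in> {1..K}"
      have m1[measurable]: "p k \<in> borel_measurable borel" using pm(1)[OF k, of "p k"] H k by simp
      have m2[measurable]: "\<eta> k \<in> borel_measurable borel" using meas(1)[OF k] .
      show "f k \<in> borel_measurable lborel" unfolding f_def by measurable
      show "0 \<le> f k y" for y using pm(2)[OF k] H k by (simp add: f_def)
    qed simp
    also have "\<dots> \<le> (\<Prod>k\<in>{1..K}. risk (\<delta> k) (\<eta> k) (P k))"
    proof (rule prod_mono_ennreal)
      fix k assume k: "k \<in> {1..K}"
      have "(\<integral>\<^sup>+ y. ennreal (f k y) \<partial>lborel) \<le>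
          (\<integral>\<^sup>+ \<xi>. ennreal (exp (- \<eta> k (\<delta> k + h k \<bullet> \<xi>)) * p k \<xi>) \<partial>lborel)"
      proof (intro nn_integral_mono ennreal_leI)
        fix y
        have g: "h k \<bullet> x k - c k \<ge> \<delta> k"
          using geomA[OF ne[OF k] dotA[OF k, of "x k"]] H k by (simp add: h_def c_def \<delta>_def)
        have "\<eta> k (\<delta> k + h k \<bullet> y) \<le> \<eta> k (h k \<bullet> (x k + y) - c k)"
          using g by (intro monoD[OF meas(2)[OF k]]) (simp add: inner_add_right)
        thus "f k y \<le> exp (- \<eta> k (\<delta> k + h k \<bullet> y)) * p k y"
          unfolding f_def using pm(2)[OF k] H k by (intro mult_right_mono) auto
      qed
      also have "\<dots> \<le> risk (\<delta> k) (\<eta> k) (P k)"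
        using risk_ge1[OF hn[OF k]] H k by auto
      finally show "(\<integral>\<^sup>+ y. ennreal (f k y) \<partial>lborel) \<le> risk (\<delta> k) (\<eta> k) (P k)" .
    qed
    finally show "(\<integral>\<^sup>+ \<xi>. ennreal (exp (- \<phi>K (\<lambda>k. x k + \<xi> k)) * (\<Prod>k\<in>{1..K}. p k (\<xi> k)))
               \<partial>(PiM {1..K} (\<lambda>_. lborel))) \<le> (\<Prod>k\<in>{1..K}. risk (\<delta> k) (\<eta> k) (P k))" .
  next
    fix x :: "nat \<Rightarrow> 'a" and p assume H: "\<forall>k\<in>{1..K}. x k \<in> X2 k \<and> p k \<in> P k"
    define f where "f k y = exp (\<eta> k (h k \<bullet> (x k + y) - c k)) * p k y" for k y
    have "(\<integral>\<^sup>+ \<xi>. ennreal (exp (\<phi>K (\<lambda>k. x k + \<xi> k)) * (\<Prod>k\<in>{1..K}. p k (\<xi> k)))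
               \<partial>(PiM {1..K} (\<lambda>_. lborel))) = (\<integral>\<^sup>+ \<xi>. ennreal (\<Prod>k\<in>{1..K}. f k (\<xi> k))
               \<partial>(PiM {1..K} (\<lambda>_. lborel)))"
      by (intro nn_integral_cong) (simp add: f_def \<phi>K_def prod.distrib exp_sum)
    also have "\<dots> = (\<Prod>k\<in>{1..K}. \<integral>\<^sup>+ y. ennreal (f k y) \<partial>lborel)"
    proof (rule prod_int)
      fix k assume k: "k \<in> {1..K}"
      have m1[measurable]: "p k \<in> borel_measurable borel" using pm(1)[OF k, of "p k"] H k by simp
      have m2[measurable]: "\<eta> k \<in> borel_measurable borel" using meas(1)[OF k] .
      show "f k \<in> borel_measurable lborel" unfolding f_def by measurable
      show "0 \<le> f k y" for y using pm(2)[OF k] H k by (simp add: f_def)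
    qed simp
    also have "\<dots> \<le> (\<Prod>k\<in>{1..K}. risk (\<delta> k) (\<eta> k) (P k))"
    proof (rule prod_mono_ennreal)
      fix k assume k: "k \<in> {1..K}"
      have "(\<integral>\<^sup>+ y. ennreal (f k y) \<partial>lborel) \<le>
          (\<integral>\<^sup>+ \<xi>. ennreal (exp (\<eta> k (h k \<bullet> \<xi> - \<delta> k)) * p k \<xi>) \<partial>lborel)"
      proof (intro nn_integral_mono ennreal_leI)
        fix y
        have g: "h k \<bullet> x k - c k \<le> - \<delta> k"
          using geomB[OF ne[OF k] dotB[OF k, of "x k"]] H k by (simp add: h_def c_def \<delta>_def)
        have "\<eta> k (h k \<bullet> (x k + y) - c k) \<le> \<eta> k (h k \<bullet> y - \<delta> k)"
          using g by (intro monoD[OF meas(2)[OF k]]) (simp add: inner_add_right)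
        thus "f k y \<le> exp (\<eta> k (h k \<bullet> y - \<delta> k)) * p k y"
          unfolding f_def using pm(2)[OF k] H k by (intro mult_right_mono) auto
      qed
      also have "\<dots> \<le> risk (\<delta> k) (\<eta> k) (P k)"
        using risk_ge2[OF hn[OF k]] H k by auto
      finally show "(\<integral>\<^sup>+ y. ennreal (f k y) \<partial>lborel) \<le> risk (\<delta> k) (\<eta> k) (P k)" .
    qed
    finally show "(\<integral>\<^sup>+ \<xi>. ennreal (exp (\<phi>K (\<lambda>k. x k + \<xi> k)) * (\<Prod>k\<in>{1..K}. p k (\<xi> k)))
               \<partial>(PiM {1..K} (\<lambda>_. lborel))) \<le> (\<Prod>k\<in>{1..K}. risk (\<delta> k) (\<eta> k) (P k))" .
  qed
qed

end
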